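(* Let $(E,\mathcal{L},g)$ be a uniform affine oriented matroid with $|E|>1$ such that every maximal element of $\mathcal{L}^{++}$ is a tope of $\mathcal{L}$ and $X\backslash g\ne0$ for all $X\in\mathcal{L}^+$. Let $X\in\mathcal{L}^{++}$. Then a tope $T$ of $\mathcal{L}$ with $T>X$ lies in $\mathcal{C}_X$ if and only if $T\backslash g$ is a tope in $\mathcal{D}_X$. Moreover the map $r:\mathcal{C}_X\to\mathcal{D}_X$, $r(T)=T\backslash g$, is a bijection, with inverse $h$ given by $h(T)_g=+$ and $h(T)_e=T_e$ for $e\neq g$.
   Context: An oriented matroid $(E,\mathcal{L})$ is given by covectors $\mathcal{L}\subseteq\{+,-,0\}^E$ satisfying the standard covector axioms, ordered componentwise by $0<+$, $0<-$; topes are maximal covectors. Uniform: the underlying matroid (flats $z(X)=\{e:X_e=0\}$) of rank $r$ has every $r$-subset of $E$ as a basis. Affine oriented matroid $(E,\mathcal{L},g)$: $g\in E$ a non-loop; $\mathcal{L}^+=\{X\in\mathcal{L}:X_g=+\}$; bounded complex $\mathcal{L}^{++}=\{X\in\mathcal{L}^+:\ \text{all } 0\neq Y\le X \text{ in } \mathcal{L} \text{ have } Y_g=+\}$. $X\backslash g$ is the restriction of $X$ to $E\setminus\{g\}$; contraction $\mathcal{L}/g=\{Y\backslash g: Y\in\mathcal{L}, Y_g=0\}$. For $X\in\mathcal{L}^{++}$: $\mathcal{C}_X$ is the set of topes $T$ of $\mathcal{L}$ with $T>X$ and $T\notin\mathcal{L}^{++}$; $\mathcal{D}_X$ is the set of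 topes $T$ of $\mathcal{L}/g$ with $T_e=X_e$ for all $e\in\operatorname{supp}(X)\setminus\{g\}$ (equivalently $T\ge X\backslash g$). *)

theory Defs
  imports Main
begin

datatype sign = Zero | Pos | Neg

type_synonym 'a svec = "'a \<Rightarrow> sign"

definition zerov :: "'a svec" where "zerov = (\<lambda>_. Zero)"

fun sneg :: "sign \<Rightarrow> sign" where
  "sneg Zero = Zero" | "sneg Pos = Neg" | "sneg Neg = Pos"

definition negv :: "'a svec \<Rightarrow> 'a svec" where "negv X = (\<lambda>e. sneg (X e))"

definition compv :: "'a svec \<Rightarrow> 'a svec \<Rightarrow> 'a svec" where
  "compv X Y = (\<lambda>e. if X e \<noteq> Zero then X e else Y e)"

definition supp :: "'a svec \<Rightarrow> 'a set" where "supp X = {e. X e \<noteq> Zero}"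

definition sepset :: "'a svec \<Rightarrow> 'a svec \<Rightarrow> 'a set" where
  "sepset X Y = {e. X e \<noteq> Zero \<and> X e = sneg (Y e)}"

definition sle :: "'a svec \<Rightarrow> 'a svec \<Rightarrow> bool" where
  "sle X Y \<longleftrightarrow> (\<forall>e. X e = Zero \<or> X e = Y e)"

definition sless :: "'a svec \<Rightarrow> 'a svec \<Rightarrow> bool" where
  "sless X Y \<longleftrightarrow> sle X Y \<and> X \<noteq> Y"

text \<open>Sign vectors on ground set E are functions that vanish outside E.\<close>
definition oriented_matroid :: "'a set \<Rightarrow> 'a svec set \<Rightarrow> bool" where
  "oriented_matroid E L \<longleftrightarrow>
     finite E \<and>
     (\<forall>X\<in>L. \<forall>e. e \<notin> E \<longrightarrow> X e = Zero) \<and>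
     zerov \<in> L \<and>
     (\<forall>X\<in>L. negv X \<in> L) \<and>
     (\<forall>X\<in>L. \<forall>Y\<in>L. compv X Y \<in> L) \<and>
     (\<forall>X\<in>L. \<forall>Y\<in>L. \<forall>e\<in>sepset X Y. \<exists>Z\<in>L. Z e = Zero \<and>
          (\<forall>f. f \<notin> sepset X Y \<longrightarrow> Z f = compv X Y f))"

definition maximal_in :: "'a svec set \<Rightarrow> 'a svec \<Rightarrow> bool" where
  "maximal_in L T \<longleftrightarrow> T \<in> L \<and> \<not> (\<exists>Y\<in>L. sless T Y)"

definition topes :: "'a svec set \<Rightarrow> 'a svec set" where
  "topes L = {T. maximal_in L T}"

definition zeroset :: "'a set \<Rightarrow> 'a svec \<Rightarrow> 'a set" where
  "zeroset E X = {e\<in>E. X e = Zero}"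

definition flats :: "'a set \<Rightarrow> 'a svec set \<Rightarrow> 'a set set" where
  "flats E L = zeroset E ` L"

definition mclosure :: "'a set \<Rightarrow> 'a svec set \<Rightarrow> 'a set \<Rightarrow> 'a set" where
  "mclosure E L A = E \<inter> \<Inter>{F\<in>flats E L. A \<subseteq> F}"

definition mindep :: "'a set \<Rightarrow> 'a svec set \<Rightarrow> 'a set \<Rightarrow> bool" where
  "mindep E L A \<longleftrightarrow> A \<subseteq> E \<and> (\<forall>a\<in>A. a \<notin> mclosure E L (A - {a}))"

definition mbases :: "'a set \<Rightarrow> 'a svec set \<Rightarrow> 'a set set" where
  "mbases E L = {B. mindep E L B \<and> \<not> (\<exists>B'. mindep E L B' \<and> B \<subset> B')}"

definition uniform_om :: "'a set \<Rightarrow> 'a svec set \<Rightarrow> bool" where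
  "uniform_om E L \<longleftrightarrow> (\<exists>r. mbases E L = {B. B \<subseteq> E \<and> card B = r})"

definition nonloop :: "'a set \<Rightarrow> 'a svec set \<Rightarrow> 'a \<Rightarrow> bool" where
  "nonloop E L g \<longleftrightarrow> g \<in> E \<and> (\<exists>X\<in>L. X g \<noteq> Zero)"

definition affine_om :: "'a set \<Rightarrow> 'a svec set \<Rightarrow> 'a \<Rightarrow> bool" where
  "affine_om E L g \<longleftrightarrow> oriented_matroid E L \<and> nonloop E L g"

definition Lplus :: "'a svec set \<Rightarrow> 'a \<Rightarrow> 'a svec set" where
  "Lplus L g = {X\<in>L. X g = Pos}"

definition Lpp :: "'a svec set \<Rightarrow> 'a \<Rightarrow> 'a svec set" where
  "Lpp L g = {X\<in>Lplus L g. \<forall>Y\<in>L. Y \<noteq> zerov \<and> sle Y X \<longrightarrow> Y g = Pos}"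

text \<open>Deletion of g from a sign vector (restriction to E - {g}), represented by
  setting the g-entry to 0.\<close>
definition del :: "'a svec \<Rightarrow> 'a \<Rightarrow> 'a svec" where
  "del X g = X(g := Zero)"

definition contr :: "'a svec set \<Rightarrow> 'a \<Rightarrow> 'a svec set" where
  "contr L g = {del Y g | Y. Y \<in> L \<and> Y g = Zero}"

definition CX :: "'a svec set \<Rightarrow> 'a \<Rightarrow> 'a svec \<Rightarrow> 'a svec set" where
  "CX L g X = {T\<in>topes L. sless X T \<and> T \<notin> Lpp L g}"

definition DX :: "'a svec set \<Rightarrow> 'a \<Rightarrow> 'a svec \<Rightarrow> 'a svec set" where
  "DX L g X = {T\<in>topes (contr L g). \<forall>e\<in>supp X - {g}. T e = X e}"

end

theory Submission imports Defs begin

lemma mclosure_iff: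
  "a \<in> mclosure E L A \<longleftrightarrow> a \<in> E \<and> (\<forall>Y\<in>L. A \<subseteq> zeroset E Y \<longrightarrow> a \<in> zeroset E Y)"
  unfolding mclosure_def flats_def by auto

lemma mindep_subset:
  assumes "mindep E L A" "B \<subseteq> A" shows "mindep E L B"
  using assms unfolding mindep_def mclosure_iff by blast

lemma mindep_extend:
  assumes "finite E" "mindep E L A" shows "\<exists>B\<in>mbases E L. A \<subseteq> B"
proof -
  let ?S = "{B. mindep E L B \<and> A \<subseteq> B}"
  have fin: "finite ?S"
    by (rule finite_subset[of _ "Pow E"]) (auto simp: mindep_def assms(1))
  have ne: "A \<in> ?S" using assms by auto
  define m where "m = Max (card ` ?S)"
  have "m \<in> card ` ?S" unfolding m_def using fin ne by (intro Max_in) auto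
  then obtain B where B: "B \<in> ?S" "card B = m" by auto
  have mx: "\<And>C. C \<in> ?S \<Longrightarrow> card C \<le> m" unfolding m_def using fin by auto
  have "B \<in> mbases E L"
    unfolding mbases_def
  proof (intro CollectI conjI notI)
    show "mindep E L B" using B by auto
  next
    assume "\<exists>B'. mindep E L B' \<and> B \<subset> B'"
    then obtain B' where "mindep E L B'" "B \<subset> B'" by blast
    moreover then have "finite B'" using assms(1) unfolding mindep_def by (meson finite_subset)
    ultimately have "card B < card B'" "B' \<in> ?S" using B by (auto intro: psubset_card_mono)
    then show False using mx B by fastforce
  qed
  then show ?thesis using B by auto
qed

lemma om_props:
  assumes "oriented_matroid E L"
  shows "finite E" "\<And>X e. X \<in> L \<Longrightarrow> e \<notin> E \<Longrightarrow> X e = Zero" "zerov \<in> L"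
    "\<And>X. X \<in> L \<Longrightarrow> negv X \<in> L" "\<And>X Y. X \<in> L \<Longrightarrow> Y \<in> L \<Longrightarrow> compv X Y \<in> L"
    "\<And>X Y e. X \<in> L \<Longrightarrow> Y \<in> L \<Longrightarrow> e \<in> sepset X Y \<Longrightarrow> \<exists>Z\<in>L. Z e = Zero \<and>
          (\<forall>f. f \<notin> sepset X Y \<longrightarrow> Z f = compv X Y f)"
  using assms unfolding oriented_matroid_def by blast+

lemma vanish:
  assumes om: "oriented_matroid E L" and U: "mbases E L = {B. B \<subseteq> E \<and> card B = r}"
    and B: "B \<subseteq> E" "card B = r" and Y: "Y \<in> L" "\<forall>b\<in>B. Y b = Zero" and x: "x \<in> E"
  shows "Y x = Zero"
proof (rule ccontr)
  assume Yx: "Y x \<noteq> Zero"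
  note O = om_props[OF om]
  have xB: "x \<notin> B" using Yx Y by auto
  have finB: "finite B" using B O(1) finite_subset by blast
  have "\<not> mindep E L (insert x B)"
  proof
    assume "mindep E L (insert x B)"
    then obtain B' where "B' \<in> mbases E L" "insert x B \<subseteq> B'" using mindep_extend O(1) by blast
    then have "B' \<subseteq> E" "card B' = r" "insert x B \<subseteq> B'" using U by auto
    then have "card (insert x B) \<le> r" using O(1) by (metis card_mono finite_subset)
    then show False using finB xB B(2) by simp
  qed
  then obtain a where a: "a \<in> insert x B" "a \<in> mclosure E L (insert x B - {a})"
    using B x unfolding mindep_def by blast
  show False
  proof (cases "a = x")
    case True
    then have "insert x B - {a} = B" using xB by auto
    then have "B \<subseteq> zeroset E Y \<longrightarrow> x \<in> zeroset E Y" using a True Y(1) unfolding mclosure_iff by auto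
    then show False using B Y Yx unfolding zeroset_def by auto
  next
    case False
    then have aB: "a \<in> B" using a by auto
    have "mindep E L B" using U B unfolding mbases_def by auto
    then have "a \<notin> mclosure E L (B - {a})" using aB unfolding mindep_def by auto
    then obtain W where W: "W \<in> L" "B - {a} \<subseteq> zeroset E W" "a \<notin> zeroset E W"
      using aB B unfolding mclosure_iff by auto
    have Wa: "W a \<noteq> Zero" using W aB B unfolding zeroset_def by auto
    have Wb: "\<forall>b\<in>B-{a}. W b = Zero" using W unfolding zeroset_def by auto
    have cl: "\<And>Z. Z \<in> L \<Longrightarrow> Z x = Zero \<Longrightarrow> \<forall>b\<in>B-{a}. Z b = Zero \<Longrightarrow> Z a = Zero"
    proof -
      fix Z assume Z: "Z \<in> L" "Z x = Zero" "\<forall>b\<in>B-{a}. Z b = Zero"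
      have "insert x B - {a} \<subseteq> zeroset E Z" using Z x B False unfolding zeroset_def by auto
      then have "a \<in> zeroset E Z" using a(2) Z(1) unfolding mclosure_iff by auto
      then show "Z a = Zero" unfolding zeroset_def by auto
    qed
    show False
    proof (cases "W x = Zero")
      case True
      then show ?thesis using cl[OF W(1) True Wb] Wa by simp
    next
      case Wx: False
      define Y' where "Y' = (if W x = sneg (Y x) then Y else negv Y)"
      have Y': "Y' \<in> L" "\<forall>b\<in>B. Y' b = Zero" "W x = sneg (Y' x)"
        using Y O(4) Wx Yx unfolding Y'_def negv_def
        by (auto, (cases "W x"; cases "Y x"; auto)+)
      have "x \<in> sepset W Y'" using Y'(3) Wx unfolding sepset_def by auto
      then obtain Z where Z: "Z \<in> L" "Z x = Zero" "\<forall>f. f \<notin> sepset W Y' \<longrightarrow> Z f = compv W Y' f"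
        using O(6)[OF W(1) Y'(1)] by blast
      have "\<forall>b\<in>B-{a}. Z b = Zero"
        using Z(3) Wb Y'(2) unfolding sepset_def compv_def by auto
      moreover have "Z a = W a"
        using Z(3) Wa Y'(2) aB unfolding sepset_def compv_def by auto
      ultimately show False using cl[OF Z(1) Z(2)] Wa by simp
    qed
  qed
qed

lemma rank_le_card:
  assumes om: "oriented_matroid E L" and U: "mbases E L = {B. B \<subseteq> E \<and> card B = r}"
  shows "r \<le> card E"
proof -
  have "mindep E L {}" unfolding mindep_def by auto
  then obtain B where "B \<in> mbases E L" using mindep_extend om_props(1)[OF om] by blast
  then show ?thesis using U om_props(1)[OF om] by (auto intro: card_mono)
qed

lemma indep_small:
  assumes om: "oriented_matroid E L" and U: "mbases E L = {B. B \<subseteq> E \<and> card B = r}"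
    and A: "A \<subseteq> E" "card A \<le> r"
  shows "mindep E L A"
proof -
  have fE: "finite E" using om_props(1)[OF om] .
  have "r - card A \<le> card (E - A)" using rank_le_card[OF om U] A fE
    by (simp add: card_Diff_subset finite_subset)
  then obtain C where C: "C \<subseteq> E - A" "card C = r - card A" "finite C"
    by (rule obtain_subset_with_card_n)
  have fA: "finite A" using A fE finite_subset by blast
  have "card (A \<union> C) = r" using C A fA by (subst card_Un_disjoint) auto
  then have "A \<union> C \<in> mbases E L" using U A C by auto
  then have "mindep E L (A \<union> C)" unfolding mbases_def by auto
  then show ?thesis by (rule mindep_subset) auto
qed

lemma zeroset_small:
  assumes om: "oriented_matroid E L" and U: "mbases E L = {B. B \<subseteq> E \<and> card B = r}"
    and Y: "Y \<in> L" "Y \<noteq> zerov"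
  shows "card (zeroset E Y) < r"
proof (rule ccontr)
  assume "\<not> card (zeroset E Y) < r"
  then obtain B where B: "B \<subseteq> zeroset E Y" "card B = r" "finite B"
    by (metis not_less obtain_subset_with_card_n)
  have "\<forall>x. Y x = Zero"
  proof
    fix x show "Y x = Zero"
    proof (cases "x \<in> E")
      case True
      show ?thesis
        by (rule vanish[OF om U _ B(2) Y(1) _ True]) (use B in \<open>auto simp: zeroset_def\<close>)
    next
      case False then show ?thesis using om_props(2)[OF om Y(1)] by auto
    qed
  qed
  then show False using Y(2) unfolding zerov_def by auto
qed

lemma coord_covector:
  assumes "mindep E L I" "e \<in> I"
  shows "\<exists>W\<in>L. W e \<noteq> Zero \<and> (\<forall>f\<in>I-{e}. W f = Zero)"
proof -
  have "e \<notin> mclosure E L (I - {e})" "e \<in> E" "I \<subseteq> E" using assms unfolding mindep_def by auto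
  then obtain W where "W \<in> L" "I - {e} \<subseteq> zeroset E W" "e \<notin> zeroset E W"
    unfolding mclosure_iff by auto
  then show ?thesis using \<open>e \<in> E\<close> unfolding zeroset_def by auto
qed

lemma compose_cov:
  assumes om: "oriented_matroid E L" and I: "mindep E L I"
  shows "finite K \<Longrightarrow> K \<subseteq> I \<Longrightarrow> \<forall>e\<in>K. T e \<noteq> Zero \<Longrightarrow>
     \<exists>V\<in>L. (\<forall>f\<in>K. V f = T f) \<and> (\<forall>f\<in>I-K. V f = Zero)"
proof (induction K rule: finite_induct)
  case empty
  then show ?case using om_props(3)[OF om] unfolding zerov_def by auto
next
  case (insert e K)
  then obtain V where V: "V \<in> L" "\<forall>f\<in>K. V f = T f" "\<forall>f\<in>I-K. V f = Zero" by auto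
  obtain W where W: "W \<in> L" "W e \<noteq> Zero" "\<forall>f\<in>I-{e}. W f = Zero"
    using coord_covector[OF I, of e] insert by blast
  define W' where "W' = (if W e = T e then W else negv W)"
  have W': "W' \<in> L" "W' e = T e" "\<forall>f\<in>I-{e}. W' f = Zero"
    using W om_props(4)[OF om] insert(5) unfolding W'_def negv_def
    by (auto, (cases "W e"; cases "T e"; auto)+)
  have "compv V W' \<in> L" using om_props(5)[OF om V(1) W'(1)] .
  moreover have "\<forall>f\<in>insert e K. compv V W' f = T f"
    using V W' insert unfolding compv_def by auto
  moreover have "\<forall>f\<in>I - insert e K. compv V W' f = Zero"
    using V W' insert unfolding compv_def by auto
  ultimately show ?case by blast
qed

lemma del_in_L:
  assumes om: "oriented_matroid E L" and U: "mbases E L = {B. B \<subseteq> E \<and> card B = r}"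
    and T: "T \<in> L" and Y: "Y \<in> L" "Y \<noteq> zerov" "sle Y T" "Y g = Zero"
  shows "del T g \<in> L"
proof -
  note O = om_props[OF om]
  define I where "I = zeroset E Y"
  have "card I < r" unfolding I_def using zeroset_small[OF om U Y(1,2)] .
  have "I \<subseteq> E" unfolding I_def zeroset_def by auto
  then have mI: "mindep E L I" using indep_small[OF om U, of I] \<open>card I < r\<close> by simp
  define K where "K = {e\<in>I. e \<noteq> g \<and> T e \<noteq> Zero}"
  have fI: "finite I" unfolding I_def zeroset_def using O(1) by auto
  have "K \<subseteq> I" unfolding K_def by auto
  then have "finite K" using fI finite_subset by blast
  have "\<forall>e\<in>K. T e \<noteq> Zero" unfolding K_def by auto
  then obtain V where V: "V \<in> L" "\<forall>f\<in>K. V f = T f" "\<forall>f\<in>I-K. V f = Zero"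
    using compose_cov[OF om mI \<open>finite K\<close> \<open>K \<subseteq> I\<close>] by blast
  have "compv Y V = del T g"
  proof
    fix f
    show "compv Y V f = del T g f"
    proof (cases "Y f = Zero")
      case False
      then have "Y f = T f" "f \<noteq> g" using Y(3,4) unfolding sle_def by auto
      then show ?thesis using False unfolding compv_def del_def by simp
    next
      case Yf: True
      show ?thesis
      proof (cases "f \<in> E")
        case False
        then have "V f = Zero" "T f = Zero" using O(2)[OF V(1)] O(2)[OF T] by auto
        then show ?thesis using Yf unfolding compv_def del_def by simp
      next
        case True
        then have "f \<in> I" unfolding I_def zeroset_def using Yf by auto
        have "V f = del T g f"
        proof (cases "f \<in> K")
          case True
          then show ?thesis using V(2) unfolding K_def del_def by auto
        next
          case False
          then have "V f = Zero" using V(3) \<open>f \<in> I\<close> by auto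
          then show ?thesis using False \<open>f \<in> I\<close> unfolding K_def del_def by auto
        qed
        then show ?thesis using Yf unfolding compv_def by simp
      qed
    qed
  qed
  then show ?thesis using O(5)[OF Y(1) V(1)] by simp
qed

lemma not_Lpp:
  assumes "Z \<in> Lplus L g" "del Z g \<in> L" "\<forall>Y\<in>Lplus L g. del Y g \<noteq> zerov"
  shows "Z \<notin> Lpp L g"
proof
  assume "Z \<in> Lpp L g"
  then have "del Z g \<noteq> zerov \<and> sle (del Z g) Z \<longrightarrow> del Z g g = Pos"
    using assms(2) unfolding Lpp_def by auto
  moreover have "del Z g \<noteq> zerov" using assms by auto
  moreover have "sle (del Z g) Z" unfolding sle_def del_def by auto
  ultimately show False unfolding del_def by auto
qed


lemma sless_diff:
  assumes "sless D Z" shows "\<exists>f. D f = Zero \<and> Z f \<noteq> Zero"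
proof -
  obtain f where "D f \<noteq> Z f" using assms unfolding sless_def by auto
  then show ?thesis using assms unfolding sless_def sle_def by metis
qed

theorem lemma4p4:
  fixes E :: "'a set" and L :: "'a svec set" and g :: 'a and X :: "'a svec"
  assumes "affine_om E L g"
    and "uniform_om E L"
    and "card E > 1"
    and "\<forall>Y. maximal_in (Lpp L g) Y \<longrightarrow> Y \<in> topes L"
    and "\<forall>Y\<in>Lplus L g. del Y g \<noteq> zerov"
    and "X \<in> Lpp L g"
  shows "(\<forall>T\<in>topes L. sless X T \<longrightarrow> (T \<in> CX L g X \<longleftrightarrow> del T g \<in> DX L g X))
    \<and> bij_betw (\<lambda>T. del T g) (CX L g X) (DX L g X)
    \<and> (\<forall>T\<in>DX L g X. T(g := Pos) \<in> CX L g X \<and> del (T(g := Pos)) g = T)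
    \<and> (\<forall>T\<in>CX L g X. (del T g)(g := Pos) = T)"
proof -
  have om: "oriented_matroid E L" and nl: "nonloop E L g" using assms(1) unfolding affine_om_def by auto
  obtain r where U: "mbases E L = {B. B \<subseteq> E \<and> card B = r}" using assms(2) unfolding uniform_om_def by auto
  note O = om_props[OF om]
  have gE: "g \<in> E" using nl unfolding nonloop_def by auto
  obtain W0 where W0: "W0 \<in> L" "W0 g \<noteq> Zero" using nl unfolding nonloop_def by auto
  have XL: "X \<in> L" "X g = Pos" "X \<in> Lplus L g" using assms(6) unfolding Lpp_def Lplus_def by auto
  have A5: "\<forall>Y\<in>Lplus L g. del Y g \<noteq> zerov" using assms(5) .
  have Tg: "T g = Pos" if "sless X T" for T
  proof -
    have "X g = Zero \<or> X g = T g" using that unfolding sless_def sle_def by blast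
    then show ?thesis using XL(2) by simp
  qed
  have delg: "\<And>Z. Z g = Zero \<Longrightarrow> del Z g = Z" unfolding del_def by auto
  have contrE: "\<And>Z. Z \<in> contr L g \<Longrightarrow> Z \<in> L \<and> Z g = Zero"
    unfolding contr_def del_def by (auto simp: fun_upd_idem)
  have contrI: "Z \<in> contr L g" if "Z \<in> L" "Z g = Zero" for Z
    unfolding contr_def by (intro CollectI exI[of _ Z]) (simp add: delg that)
  have A1: "del T g \<in> DX L g X" if T: "T \<in> CX L g X" for T
  proof -
    have T1: "T \<in> L" "maximal_in L T" "sless X T" "T \<notin> Lpp L g"
      using T unfolding CX_def topes_def maximal_in_def by auto
    have TP: "T \<in> Lplus L g" using T1 Tg unfolding Lplus_def by auto
    then obtain Y where Y: "Y \<in> L" "Y \<noteq> zerov" "sle Y T" "Y g \<noteq> Pos"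
      using T1(4) unfolding Lpp_def by auto
    have "Y g = Zero \<or> Y g = T g" using Y(3) unfolding sle_def by blast
    then have "Y g = Zero" using Y(4) Tg[OF T1(3)] by auto
    then have DL: "del T g \<in> L" using del_in_L[OF om U T1(1) Y(1,2,3)] by simp
    have Dc: "del T g \<in> contr L g" using contrI[OF DL] unfolding del_def by simp
    have "maximal_in (contr L g) (del T g)"
      unfolding maximal_in_def
    proof (intro conjI Dc notI)
      assume "\<exists>Z\<in>contr L g. sless (del T g) Z"
      then obtain Z where Z: "Z \<in> contr L g" "sless (del T g) Z" by auto
      then have ZL: "Z \<in> L" "Z g = Zero" using contrE by auto
      obtain f where f: "del T g f = Zero" "Z f \<noteq> Zero" using sless_diff[OF Z(2)] by auto
      then have "f \<noteq> g" using ZL by auto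
      then have Tf: "T f = Zero" using f unfolding del_def by auto
      have "compv T Z \<in> L" using O(5)[OF T1(1) ZL(1)] .
      moreover have "sless T (compv T Z)"
        unfolding sless_def sle_def compv_def
      proof (intro conjI allI)
        show "T \<noteq> (\<lambda>e. if T e \<noteq> Zero then T e else Z e)"
        proof
          assume "T = (\<lambda>e. if T e \<noteq> Zero then T e else Z e)"
          then have "T f = (if T f \<noteq> Zero then T f else Z f)" by (rule fun_cong)
          then show False using Tf f(2) by simp
        qed
      qed auto
      ultimately show False using T1(2) unfolding maximal_in_def by auto
    qed
    moreover have "\<forall>e\<in>supp X - {g}. del T g e = X e"
      using T1(3) unfolding sless_def sle_def supp_def del_def by auto
    ultimately show ?thesis unfolding DX_def topes_def by auto
  qed
  have A2: "T \<in> CX L g X" if T: "T \<in> topes L" "sless X T" "del T g \<in> DX L g X" for T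
  proof -
    have "del T g \<in> topes (contr L g)" using T(3) unfolding DX_def by blast
    then have "del T g \<in> contr L g" unfolding topes_def maximal_in_def by blast
    then have "del T g \<in> L" using contrE by blast
    moreover have "T \<in> L" using T(1) unfolding topes_def maximal_in_def by blast
    then have "T \<in> Lplus L g" using Tg[OF T(2)] unfolding Lplus_def by blast
    ultimately have "T \<notin> Lpp L g" using not_Lpp[of T L g] A5 by blast
    then show ?thesis using T unfolding CX_def by blast
  qed
  have Bm: "T'(g := Pos) \<in> CX L g X \<and> del (T'(g := Pos)) g = T'" if T': "T' \<in> DX L g X" for T'
  proof -
    have T1: "maximal_in (contr L g) T'" "\<forall>e\<in>supp X - {g}. T' e = X e"
      using T' unfolding DX_def topes_def by auto
    then have T'c: "T' \<in> contr L g" unfolding maximal_in_def by auto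
    then have T'L: "T' \<in> L" "T' g = Zero" using contrE by auto
    have full: "T' e \<noteq> Zero" if e: "e \<in> E" "e \<noteq> g" for e
    proof
      assume T'e: "T' e = Zero"
      show False
      proof (cases "r \<ge> 2")
        case True
        have "card {g, e} \<le> r" using e True by auto
        then have "mindep E L {g, e}" using indep_small[OF om U] e gE by auto
        then obtain Q where Q: "Q \<in> L" "Q e \<noteq> Zero" "Q g = Zero"
          using coord_covector[of E L "{g,e}" e] e by auto
        have "compv T' Q \<in> contr L g"
          using contrI O(5)[OF T'L(1) Q(1)] T'L(2) Q(3) unfolding compv_def by auto
        moreover have "sless T' (compv T' Q)"
          unfolding sless_def sle_def compv_def
        proof (intro conjI allI)
          show "T' \<noteq> (\<lambda>e. if T' e \<noteq> Zero then T' e else Q e)"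
          proof
            assume "T' = (\<lambda>e. if T' e \<noteq> Zero then T' e else Q e)"
            then have "T' e = (if T' e \<noteq> Zero then T' e else Q e)" by (rule fun_cong)
            then show False using T'e Q(2) by simp
          qed
        qed auto
        ultimately show False using T1(1) unfolding maximal_in_def by auto
      next
        case False
        define B where "B = (if r = 0 then {} else {g})"
        have B: "B \<subseteq> E" "card B = r" using False gE unfolding B_def by auto
        have "\<forall>b\<in>B. T' b = Zero" using T'L unfolding B_def by auto
        then have "\<forall>x\<in>E. T' x = Zero" using vanish[OF om U B T'L(1)] by auto
        moreover obtain f where "f \<noteq> g" "X f \<noteq> Zero"
        proof -
          have "del X g \<noteq> zerov" using A5 XL(3) by blast
          then obtain f where "del X g f \<noteq> Zero" unfolding zerov_def by blast
          then show ?thesis using that unfolding del_def by (cases "f = g") auto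
        qed
        moreover then have "f \<in> E" using O(2)[OF XL(1)] by auto
        ultimately show False using T1(2) unfolding supp_def by auto
      qed
    qed
    define W' where "W' = (if W0 g = Pos then W0 else negv W0)"
    have W0s: "W0 g = Neg \<or> W0 g = Pos" using W0(2) by (cases "W0 g") auto
    have W': "W' \<in> L" "W' g = Pos" using W0 O(4) W0s unfolding W'_def negv_def
      by auto
    define Z where "Z = T'(g := Pos)"
    have "compv T' W' = Z"
    proof
      fix f show "compv T' W' f = Z f"
      proof (cases "f = g")
        case True then show ?thesis using W'(2) T'L(2) unfolding compv_def Z_def by simp
      next
        case False
        show ?thesis
        proof (cases "f \<in> E")
          case True then show ?thesis using full[of f] False unfolding compv_def Z_def by simp
        next
          case False2: False
          then have "W' f = Zero" "T' f = Zero" using O(2)[OF W'(1)] O(2)[OF T'L(1)] by auto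
          then show ?thesis using False unfolding compv_def Z_def by simp
        qed
      qed
    qed
    then have ZL: "Z \<in> L" using O(5)[OF T'L(1) W'(1)] by simp
    have Zfull: "Z f \<noteq> Zero" if "f \<in> E" for f using full[of f] that unfolding Z_def by auto
    have Zt: "maximal_in L Z"
      unfolding maximal_in_def
    proof (intro conjI ZL notI)
      assume "\<exists>Z'\<in>L. sless Z Z'"
      then obtain Z' where "Z' \<in> L" "sless Z Z'" by auto
      then obtain f where "Z f = Zero" "Z' f \<noteq> Zero" using sless_diff by blast
      then show False using Zfull O(2)[OF \<open>Z' \<in> L\<close>] by metis
    qed
    have ZP: "Z \<in> Lplus L g" using ZL unfolding Z_def Lplus_def by auto
    have dZ: "del Z g = T'" using T'L(2) unfolding Z_def del_def by auto
    have ZnL: "Z \<notin> Lpp L g" using not_Lpp[OF ZP] dZ T'L(1) A5 by auto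
    have sleXZ: "sle X Z"
      unfolding sle_def
    proof
      fix f show "X f = Zero \<or> X f = Z f"
      proof (cases "f = g")
        case True then show ?thesis using XL(2) unfolding Z_def by simp
      next
        case False
        then have "X f \<noteq> Zero \<longrightarrow> T' f = X f" using T1(2) unfolding supp_def by blast
        then show ?thesis using False unfolding Z_def by auto
      qed
    qed
    have "X \<noteq> Z" using ZnL assms(6) by auto
    then have "sless X Z" using sleXZ unfolding sless_def by auto
    then have "Z \<in> CX L g X" using Zt ZnL unfolding CX_def topes_def by auto
    then show ?thesis using dZ unfolding Z_def by auto
  qed
  have Cm: "(del T g)(g := Pos) = T" if "T \<in> CX L g X" for T
  proof -
    have "T g = Pos" using that Tg unfolding CX_def by auto
    then show ?thesis unfolding del_def by auto
  qed
  have bij: "bij_betw (\<lambda>T. del T g) (CX L g X) (DX L g X)"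
    unfolding bij_betw_def
  proof
    show "inj_on (\<lambda>T. del T g) (CX L g X)"
      by (rule inj_onI) (metis Cm)
    show "(\<lambda>T. del T g) ` CX L g X = DX L g X"
    proof
      show "(\<lambda>T. del T g) ` CX L g X \<subseteq> DX L g X" using A1 by blast
      show "DX L g X \<subseteq> (\<lambda>T. del T g) ` CX L g X"
      proof
        fix T' assume "T' \<in> DX L g X"
        then have "T'(g := Pos) \<in> CX L g X" "del (T'(g := Pos)) g = T'" using Bm by auto
        then show "T' \<in> (\<lambda>T. del T g) ` CX L g X" by (metis image_eqI)
      qed
    qed
  qed
  have "\<forall>T\<in>topes L. sless X T \<longrightarrow> (T \<in> CX L g X \<longleftrightarrow> del T g \<in> DX L g X)"
    using A1 A2 by blast
  then show ?thesis using bij Bm Cm by blast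
qed

end
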